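(* Define $\mathrm{Mex}(F)=\min(\mathbb{N}_0\setminus F)$ for $F\subseteq\mathbb{N}_0$, and $a+D=\{a+d:d\in D\}$. Define triples $v(n)=(v_1(n),v_2(n),v_3(n))$, $n\ge 0$, recursively by $v(0)=(0,0,0)$ and, for $n\ge 0$, with $F_n=\{v_i(k): 0\le k\le n,\ i\in\{1,2,3\}\}$ and $D_n=\bigcup_{k=0}^{n}\{v_2(k)-v_1(k),\,v_3(k)-v_2(k),\,v_3(k)-v_1(k)\}$, \[ v_1(n+1)=\mathrm{Mex}(F_n),\quad v_2(n+1)=\mathrm{Mex}\big((v_1(n+1)+D_n)\cup\{1,\dots,v_1(n+1)\}\cup F_n\big), \] \[ v_3(n+1)=\mathrm{Mex}\big((v_2(n+1)+D_n)\cup\{1,\dots,v_2(n+1)\}\cup F_n\big). \] For a finite set $K\subseteq\mathbb{N}_0$ let $\mathrm{Bl}(K)$ be the maximum length (number of elements) of a run of consecutive integers $m,m+1,\dots,m+j-1$ contained in $K$ (with $\mathrm{Bl}(\emptyset)=0$). Then for all $n\ge 0$: \[ \mathrm{Bl}\big(F_n\cap[\mathrm{Mex}(F_n),\,\mathrm{Mex}(F_n)+\mathrm{Mex}(D_n)-1]\big)\le 3, \] \[ v_1(n+1)-v_1(n)\in\{1,2,3,4\},\quad v_2(n+1)-v_2(n)\in\{2,3,\dots,8\},\quad v_3(n+1)-v_3(n)\in\{3,4,\dots,12\}, \] and for all $n\ge 1$, $\mathrm{Mex}(D_n)-\mathrm{Mex}(D_{n-1})\in\{1,2,3,4\}$.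
   Context: $\mathbb{N}_0$ denotes the nonnegative integers; $[a,b]$ denotes the integer interval $\{m\in\mathbb{Z}: a\le m\le b\}$. *)

theory Defs
  imports Main
begin

definition Mex :: "nat set \<Rightarrow> nat" where
  "Mex F = (LEAST m. m \<notin> F)"

definition shift :: "nat \<Rightarrow> nat set \<Rightarrow> nat set" where
  "shift a D = {a + d | d. d \<in> D}"

definition Fset :: "(nat \<times> nat \<times> nat) list \<Rightarrow> nat set" where
  "Fset hs = (\<Union>(a, b, c) \<in> set hs. {a, b, c})"

definition Dset :: "(nat \<times> nat \<times> nat) list \<Rightarrow> nat set" where
  "Dset hs = (\<Union>(a, b, c) \<in> set hs. {b - a, c - b, c - a})"

definition next_triple :: "(nat \<times> nat \<times> nat) list \<Rightarrow> nat \<times> nat \<times> nat" where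
  "next_triple hs =
     (let F = Fset hs; D = Dset hs;
          x1 = Mex F;
          x2 = Mex (shift x1 D \<union> {1..x1} \<union> F);
          x3 = Mex (shift x2 D \<union> {1..x2} \<union> F)
      in (x1, x2, x3))"

fun vhist :: "nat \<Rightarrow> (nat \<times> nat \<times> nat) list" where
  "vhist 0 = [(0, 0, 0)]"
| "vhist (Suc n) = vhist n @ [next_triple (vhist n)]"

definition v :: "nat \<Rightarrow> nat \<times> nat \<times> nat" where
  "v n = vhist n ! n"

definition v1 :: "nat \<Rightarrow> nat" where "v1 n = fst (v n)"
definition v2 :: "nat \<Rightarrow> nat" where "v2 n = fst (snd (v n))"
definition v3 :: "nat \<Rightarrow> nat" where "v3 n = snd (snd (v n))"

definition F :: "nat \<Rightarrow> nat set" where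
  "F n = (\<Union>k\<in>{0..n}. {v1 k, v2 k, v3 k})"

definition D :: "nat \<Rightarrow> nat set" where
  "D n = (\<Union>k\<in>{0..n}. {v2 k - v1 k, v3 k - v2 k, v3 k - v1 k})"

definition Bl :: "nat set \<Rightarrow> nat" where
  "Bl K = Max {j. \<exists>m. {m..<m + j} \<subseteq> K}"

end

theory Submission
  imports Defs
begin

lemma Mex_eqI: assumes "m \<notin> S" "\<And>i. i < m \<Longrightarrow> i \<in> S" shows "Mex S = m"
  unfolding Mex_def
proof (rule Least_equality)
  show "m \<notin> S" by (rule assms(1))
  fix y assume "y \<notin> S" then show "m \<le> y" using assms(2) leI by blast
qed

lemma Mex_notin: "finite S \<Longrightarrow> Mex S \<notin> S"
proof -
  assume "finite S"
  then have "\<exists>a. a \<notin> S" using ex_new_if_finite infinite_UNIV_nat by blast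
  then show ?thesis unfolding Mex_def by (rule LeastI_ex)
qed

lemma Mex_less: "i < Mex S \<Longrightarrow> i \<in> S"
  unfolding Mex_def using not_less_Least by blast

lemma Mex_le: "m \<notin> S \<Longrightarrow> Mex S \<le> m"
  unfolding Mex_def by (rule Least_le)

lemma mem_shift: "x \<in> shift a S \<longleftrightarrow> (a \<le> x \<and> x - a \<in> S)"
  unfolding shift_def by force

lemma len_vhist: "length (vhist n) = Suc n" by (induction n) auto

lemma vhist_nth: "k \<le> n \<Longrightarrow> vhist n ! k = v k"
proof (induction n)
  case 0 then show ?case by (simp add: v_def)
next
  case (Suc n)
  show ?case
  proof (cases "k = Suc n")
    case True then show ?thesis by (simp add: v_def)
  next
    case False then have "k \<le> n" using Suc.prems by simp
    then show ?thesis using Suc.IH by (simp add: nth_append len_vhist)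
  qed
qed

lemma set_vhist: "set (vhist n) = v ` {0..n}"
proof -
  have "set (vhist n) = {vhist n ! i | i. i < length (vhist n)}" by (rule set_conv_nth)
  also have "\<dots> = v ` {0..n}" using vhist_nth len_vhist by (force simp: less_Suc_eq_le)
  finally show ?thesis .
qed

lemma Fset_vhist: "Fset (vhist n) = F n"
  unfolding Fset_def F_def set_vhist by (auto simp: v1_def v2_def v3_def split: prod.splits)

lemma Dset_vhist: "Dset (vhist n) = D n"
  unfolding Dset_def D_def set_vhist by (auto simp: v1_def v2_def v3_def split: prod.splits)

lemma v_Suc: "v (Suc n) = next_triple (vhist n)"
  unfolding v_def by (simp add: nth_append len_vhist)

lemma v1_Suc: "v1 (Suc n) = Mex (F n)"
  by (simp add: v1_def v_Suc next_triple_def Let_def Fset_vhist Dset_vhist)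
lemma v2_Suc: "v2 (Suc n) = Mex (shift (v1 (Suc n)) (D n) \<union> {1..v1 (Suc n)} \<union> F n)"
  by (simp add: v1_def v2_def v_Suc next_triple_def Let_def Fset_vhist Dset_vhist)
lemma v3_Suc: "v3 (Suc n) = Mex (shift (v2 (Suc n)) (D n) \<union> {1..v2 (Suc n)} \<union> F n)"
  by (simp add: v3_def v2_def v_Suc next_triple_def Let_def Fset_vhist Dset_vhist)

lemma v0: "v1 0 = 0" "v2 0 = 0" "v3 0 = 0" by (simp_all add: v1_def v2_def v3_def v_def)

lemma F_Suc: "F (Suc n) = F n \<union> {v1 (Suc n), v2 (Suc n), v3 (Suc n)}"
  unfolding F_def by (auto simp: atLeast0_atMost_Suc)
lemma D_Suc: "D (Suc n) = D n \<union> {v2 (Suc n) - v1 (Suc n), v3 (Suc n) - v2 (Suc n), v3 (Suc n) - v1 (Suc n)}"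
  unfolding D_def by (auto simp: atLeast0_atMost_Suc)
lemma F0: "F 0 = {0}" by (simp add: F_def v0)
lemma D0: "D 0 = {0}" by (simp add: D_def v0)
lemma finF: "finite (F n)" by (simp add: F_def)
lemma finD: "finite (D n)" by (simp add: D_def)
lemma zF: "0 \<in> F n" unfolding F_def using v0 by force
lemma zD: "0 \<in> D n" unfolding D_def using v0 by force
lemma Mex01: "Mex {0} = 1" by (rule Mex_eqI) auto

definition Inv :: "nat \<Rightarrow> bool" where
  "Inv n \<longleftrightarrow> (\<forall>x\<in>D n. x + 2 \<le> 2 * Mex (D n))
     \<and> (\<forall>x. Mex (D n) \<le> x \<longrightarrow> x \<in> D n \<longrightarrow> Suc x \<notin> D n)
     \<and> (\<forall>x\<in>F n. x + 3 \<le> Mex (F n) + 2 * Mex (D n))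
     \<and> (\<forall>x\<in>F n. \<forall>y\<in>F n. Mex (F n) + Mex (D n) \<le> Suc x \<longrightarrow> x < y \<longrightarrow> x + 3 \<le> y)"

lemma Inv0: "Inv 0"
  unfolding Inv_def F0 D0 Mex01 by auto

lemma step:
  assumes inv: "Inv n"
  shows "\<exists>e\<le>2. v1 (Suc n) = Mex (F n) \<and> v2 (Suc n) = Mex (F n) + Mex (D n) + e
     \<and> v3 (Suc n) = Mex (F n) + 2 * Mex (D n) + e
     \<and> Mex (D n) + e + 1 \<le> Mex (D (Suc n)) \<and> Mex (D (Suc n)) \<le> Mex (D n) + e + 2
     \<and> Mex (F n) + 1 \<le> Mex (F (Suc n)) \<and> Inv (Suc n)"
proof -
  define f where "f = Mex (F n)"
  define d where "d = Mex (D n)"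
  have fF: "f \<notin> F n" unfolding f_def using Mex_notin finF by blast
  have fl: "\<And>i. i < f \<Longrightarrow> i \<in> F n" unfolding f_def using Mex_less by blast
  have dD: "d \<notin> D n" unfolding d_def using Mex_notin finD by blast
  have dl: "\<And>i. i < d \<Longrightarrow> i \<in> D n" unfolding d_def using Mex_less by blast
  have d1: "d \<ge> 1" using dD zD by (metis less_one not_le)
  have f1: "f \<ge> 1" using fF zF by (metis less_one not_le)
  have I1: "\<forall>x\<in>D n. x + 2 \<le> 2 * d" using inv unfolding Inv_def d_def by blast
  have I2: "\<forall>x. d \<le> x \<longrightarrow> x \<in> D n \<longrightarrow> Suc x \<notin> D n" using inv unfolding Inv_def d_def by blast
  have I3: "\<forall>x\<in>F n. x + 3 \<le> f + 2 * d" using inv unfolding Inv_def d_def f_def by blast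
  have I4: "\<forall>x\<in>F n. \<forall>y\<in>F n. f + d \<le> Suc x \<longrightarrow> x < y \<longrightarrow> x + 3 \<le> y"
    using inv unfolding Inv_def d_def f_def by blast
  have v1s: "v1 (Suc n) = f" by (simp add: v1_Suc f_def)
  have "\<exists>e\<le>2. f+d+e \<notin> F n \<and> d+e \<notin> D n \<and> (\<forall>j<e. f+d+j \<in> F n \<or> d+j \<in> D n) \<and> (e = 2 \<longrightarrow> d+1 \<in> D n)"
  proof (cases "f+d \<in> F n")
    case False then show ?thesis using dD by (intro exI[of _ 0]) auto
  next
    case True
    have n1: "f+d+1 \<notin> F n"
    proof
      assume h: "f+d+1 \<in> F n"
      have "f + d \<le> Suc (f+d) \<longrightarrow> f+d < f+d+1 \<longrightarrow> f+d+3 \<le> f+d+1"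
        using bspec[OF bspec[OF I4 True] h] by simp
      then show False by simp
    qed
    have n2: "f+d+2 \<notin> F n"
    proof
      assume h: "f+d+2 \<in> F n"
      have "f + d \<le> Suc (f+d) \<longrightarrow> f+d < f+d+2 \<longrightarrow> f+d+3 \<le> f+d+2"
        using bspec[OF bspec[OF I4 True] h] by simp
      then show False by simp
    qed
    show ?thesis
    proof (cases "d+1 \<in> D n")
      case False then show ?thesis using n1 True by (intro exI[of _ 1]) auto
    next
      case T2: True
      have "d+2 \<notin> D n" using I2 T2 by (metis Suc_eq_plus1 add_Suc_right le_add1 one_add_one)
      then show ?thesis using n2 True T2 by (intro exI[of _ 2]) (auto simp: less_2_cases_iff)
    qed
  qed
  then obtain e where e2: "e \<le> 2" and eF: "f+d+e \<notin> F n" and eD: "d+e \<notin> D n"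
    and ej: "\<And>j. j < e \<Longrightarrow> f+d+j \<in> F n \<or> d+j \<in> D n" and ee: "e = 2 \<Longrightarrow> d+1 \<in> D n" by blast
  define b where "b = f + d + e"
  have v2s: "v2 (Suc n) = b"
    unfolding v2_Suc v1s
  proof (rule Mex_eqI)
    show "b \<notin> shift f (D n) \<union> {1..f} \<union> F n"
      using eF eD d1 by (auto simp: b_def mem_shift)
    fix i assume i: "i < b"
    show "i \<in> shift f (D n) \<union> {1..f} \<union> F n"
    proof -
      consider "i = 0" | "1 \<le> i \<and> i \<le> f" | "f < i \<and> i < f + d" | "f + d \<le> i" by linarith
      then show ?thesis
      proof cases
        case 1 then show ?thesis using zF by simp
      next
        case 2 then show ?thesis by simp
      next
        case 3 then show ?thesis using dl by (auto simp: mem_shift)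
      next
        case 4
        then obtain j where j: "i = f + d + j" "j < e" using i b_def by (metis add_less_cancel_left le_add_diff_inverse)
        then show ?thesis using ej[OF j(2)] by (auto simp: mem_shift add.assoc)
      qed
    qed
  qed
  have v3s: "v3 (Suc n) = b + d"
    unfolding v3_Suc v2s
  proof (rule Mex_eqI)
    show "b + d \<notin> shift b (D n) \<union> {1..b} \<union> F n"
      using I3 dD d1 by (auto simp: b_def mem_shift)
    fix i assume i: "i < b + d"
    show "i \<in> shift b (D n) \<union> {1..b} \<union> F n"
    proof -
      consider "i = 0" | "1 \<le> i \<and> i \<le> b" | "b < i" by linarith
      then show ?thesis
      proof cases
        case 1 then show ?thesis using zF by simp
      next
        case 2 then show ?thesis by simp
      next
        case 3 then show ?thesis using dl i by (auto simp: mem_shift)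
      qed
    qed
  qed
  have DS: "D (Suc n) = D n \<union> {d + e, d, 2 * d + e}"
    unfolding D_Suc v1s v2s v3s b_def by auto
  have FS: "F (Suc n) = F n \<union> {f, b, b + d}"
    unfolding F_Suc v1s v2s v3s by auto
  define d' where "d' = Mex (D (Suc n))"
  define f' where "f' = Mex (F (Suc n))"
  have d'D: "d' \<notin> D (Suc n)" unfolding d'_def using Mex_notin finD by blast
  have f'F: "f' \<notin> F (Suc n)" unfolding f'_def using Mex_notin finF by blast
  have dlo: "d + e + 1 \<le> d'"
  proof (rule ccontr)
    assume "\<not> ?thesis"
    then have "d' \<le> d + e" by simp
    then have "d' < d \<or> d' = d \<or> d' = d + e \<or> (e = 2 \<and> d' = d + 1)" using e2 by presburger
    then have "d' \<in> D (Suc n)" unfolding DS using dl ee by auto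
    with d'D show False by simp
  qed
  have dhi: "d' \<le> d + e + 2"
  proof -
    have "\<not> (d + e + 1 \<in> D (Suc n) \<and> d + e + 2 \<in> D (Suc n))"
    proof
      assume h: "d + e + 1 \<in> D (Suc n) \<and> d + e + 2 \<in> D (Suc n)"
      have h1: "d + e + 1 \<in> D n \<or> d + e + 1 = 2 * d + e"
        using h unfolding DS by auto
      have h2: "d + e + 2 \<in> D n \<or> d + e + 2 = 2 * d + e"
        using h unfolding DS by auto
      show False
      proof (cases "d + e + 1 \<in> D n")
        case True
        show False
        proof (cases "d + e + 2 \<in> D n")
          case T2: True
          have "Suc (d + e + 1) \<notin> D n" using I2 True by simp
          then show False using T2 by simp
        next
          case False
          then have "d + e + 2 = 2 * d + e" using h2 by simp
          moreover have "d + e + 1 + 2 \<le> 2 * d" using I1 True by blast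
          ultimately show False by linarith
        qed
      next
        case False then have "d = 1" using h1 by simp
        show False
        proof (cases "d + e + 2 \<in> D n")
          case True
          then have "d + e + 2 + 2 \<le> 2 * d" using I1 by blast
          then show False using \<open>d = 1\<close> by linarith
        next
          case False then show False using h2 \<open>d = 1\<close> by simp
        qed
      qed
    qed
    then have "d + e + 1 \<notin> D (Suc n) \<or> d + e + 2 \<notin> D (Suc n)" by blast
    then show ?thesis unfolding d'_def
    proof
      assume "d + e + 1 \<notin> D (Suc n)" then show "Mex (D (Suc n)) \<le> d + e + 2" using Mex_le[of "d+e+1" "D (Suc n)"] by simp
    next
      assume "d + e + 2 \<notin> D (Suc n)" then show "Mex (D (Suc n)) \<le> d + e + 2" using Mex_le[of "d+e+2" "D (Suc n)"] by simp
    qed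
  qed
  have flo: "f + 1 \<le> f'"
  proof (rule ccontr)
    assume "\<not> ?thesis"
    then have "f' \<le> f" by simp
    then have "f' \<in> F (Suc n)" unfolding FS using fl by (cases "f' < f") auto
    with f'F show False by simp
  qed
  have J1: "\<forall>x\<in>D (Suc n). x + 2 \<le> 2 * d'"
  proof
    fix x assume "x \<in> D (Suc n)"
    then have "x \<in> D n \<or> x = d + e \<or> x = d \<or> x = 2 * d + e" unfolding DS by auto
    moreover have "x \<in> D n \<Longrightarrow> x + 2 \<le> 2 * d" using I1 by blast
    ultimately show "x + 2 \<le> 2 * d'" using dlo by linarith
  qed
  have J2: "\<forall>x. d' \<le> x \<longrightarrow> x \<in> D (Suc n) \<longrightarrow> Suc x \<notin> D (Suc n)"
  proof (intro allI impI)
    fix x assume x: "d' \<le> x" "x \<in> D (Suc n)"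
    show "Suc x \<notin> D (Suc n)"
    proof
      assume sx: "Suc x \<in> D (Suc n)"
      have x1: "x \<in> D n \<or> x = 2 * d + e" using x dlo unfolding DS by auto
      have x2: "Suc x \<in> D n \<or> Suc x = 2 * d + e" using x sx dlo unfolding DS by auto
      show False
      proof (cases "x \<in> D n")
        case True
        then have a: "x + 2 \<le> 2 * d" using I1 by blast
        show False
        proof (cases "Suc x \<in> D n")
          case True
          have "d \<le> x" using x dlo by linarith
          then show False using I2 \<open>x \<in> D n\<close> True by blast
        next
          case False then show False using x2 a by linarith
        qed
      next
        case False
        then have "x = 2 * d + e" using x1 by simp
        moreover have "Suc x \<in> D n \<Longrightarrow> Suc x + 2 \<le> 2 * d" using I1 by blast
        ultimately show False using x2 by linarith
      qed
    qed
  qed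
  have J3: "\<forall>x\<in>F (Suc n). x + 3 \<le> f' + 2 * d'"
  proof
    fix x assume "x \<in> F (Suc n)"
    then have "x \<in> F n \<or> x = f \<or> x = b \<or> x = b + d" unfolding FS by auto
    moreover have "x \<in> F n \<Longrightarrow> x + 3 \<le> f + 2 * d" using I3 by blast
    ultimately show "x + 3 \<le> f' + 2 * d'" using dlo flo d1 b_def by linarith
  qed
  have J4: "\<forall>x\<in>F (Suc n). \<forall>y\<in>F (Suc n). f' + d' \<le> Suc x \<longrightarrow> x < y \<longrightarrow> x + 3 \<le> y"
  proof (intro ballI impI)
    fix x y assume x: "x \<in> F (Suc n)" and y: "y \<in> F (Suc n)" and xy: "f' + d' \<le> Suc x" "x < y"
    have big: "f + d + e + 1 \<le> x" using xy dlo flo by linarith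
    have x0: "x \<in> F n \<or> x = f \<or> x = b \<or> x = b + d" using x unfolding FS by auto
    have y0: "y \<in> F n \<or> y = f \<or> y = b \<or> y = b + d" using y unfolding FS by auto
    have x1: "x \<in> F n \<or> x = b + d" using x0 big b_def by auto
    have y1: "y \<in> F n \<or> y = b + d" using y0 big xy b_def by auto
    show "x + 3 \<le> y"
    proof (cases "y = b + d")
      case True
      have "x \<in> F n" using x1 True xy by auto
      then have "x + 3 \<le> f + 2 * d" using I3 by blast
      then show ?thesis using True b_def by linarith
    next
      case False
      then have yF: "y \<in> F n" using y1 by simp
      then have "y + 3 \<le> f + 2 * d" using I3 by blast
      then have "x \<noteq> b + d" using xy b_def by linarith
      then have xF: "x \<in> F n" using x1 by simp
      have "f + d \<le> Suc x" using big by linarith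
      then show ?thesis using I4 xF yF xy(2) by blast
    qed
  qed
  have "Inv (Suc n)"
    unfolding Inv_def d'_def[symmetric] f'_def[symmetric] using J1 J2 J3 J4 by blast
  then show ?thesis using e2 v1s v2s v3s dlo dhi flo
    by (intro exI[of _ e]) (auto simp: f_def d_def d'_def f'_def b_def)
qed


lemma Inv_all: "Inv n"
  by (induction n) (use Inv0 step in blast)+

lemma stepn: "\<exists>e\<le>2. v1 (Suc n) = Mex (F n) \<and> v2 (Suc n) = Mex (F n) + Mex (D n) + e
     \<and> v3 (Suc n) = Mex (F n) + 2 * Mex (D n) + e
     \<and> Mex (D n) + e + 1 \<le> Mex (D (Suc n)) \<and> Mex (D (Suc n)) \<le> Mex (D n) + e + 2
     \<and> Mex (F n) + 1 \<le> Mex (F (Suc n))"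
  using step[OF Inv_all] by blast

lemma MF0: "Mex (F 0) = 1" by (simp add: F0 Mex01)
lemma MD0: "Mex (D 0) = 1" by (simp add: D0 Mex01)

lemma gen_spacing:
  fixes g :: "nat \<Rightarrow> nat"
  assumes "\<And>n. g n + c \<le> g (Suc n)" "i < j"
  shows "g i + c \<le> g j"
  using assms(2)
proof (induction j)
  case 0 then show ?case by simp
next
  case (Suc j)
  show ?case
  proof (cases "i = j")
    case True then show ?thesis using assms(1) by simp
  next
    case False then have "i < j" using Suc.prems by simp
    then have "g i + c \<le> g j" by (rule Suc.IH)
    then show ?thesis using assms(1)[of j] by linarith
  qed
qed

lemma F_mono: "Mex (F n) < Mex (F (Suc n))"
  using stepn[of n] by auto

lemma F_mono2: "k < n \<Longrightarrow> Mex (F k) < Mex (F n)"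
proof -
  assume "k < n"
  have "\<And>n. Mex (F n) + 1 \<le> Mex (F (Suc n))" using F_mono by (simp add: Suc_le_eq)
  from gen_spacing[of "\<lambda>n. Mex (F n)" 1 k n, OF this \<open>k < n\<close>] show ?thesis by simp
qed

lemma v2_sp: "v2 n + 2 \<le> v2 (Suc n)"
proof (cases n)
  case 0
  obtain e where "v2 (Suc 0) = Mex (F 0) + Mex (D 0) + e" using stepn[of 0] by blast
  then show ?thesis using 0 by (simp add: v0 MF0 MD0)
next
  case (Suc m)
  obtain e1 where e1: "v2 (Suc m) = Mex (F m) + Mex (D m) + e1" "Mex (D m) + e1 + 1 \<le> Mex (D (Suc m))"
      "Mex (F m) + 1 \<le> Mex (F (Suc m))" using stepn[of m] by blast
  obtain e2 where e2: "v2 (Suc (Suc m)) = Mex (F (Suc m)) + Mex (D (Suc m)) + e2" using stepn[of "Suc m"] by blast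
  show ?thesis unfolding Suc using e1 e2 by linarith
qed

lemma v3_sp: "v3 n + 3 \<le> v3 (Suc n)"
proof (cases n)
  case 0
  obtain e where "v3 (Suc 0) = Mex (F 0) + 2 * Mex (D 0) + e" using stepn[of 0] by blast
  then show ?thesis using 0 by (simp add: v0 MF0 MD0)
next
  case (Suc m)
  obtain e1 where e1: "v3 (Suc m) = Mex (F m) + 2 * Mex (D m) + e1" "Mex (D m) + e1 + 1 \<le> Mex (D (Suc m))"
      "Mex (F m) + 1 \<le> Mex (F (Suc m))" using stepn[of m] by blast
  obtain e2 where e2: "v3 (Suc (Suc m)) = Mex (F (Suc m)) + 2 * Mex (D (Suc m)) + e2" using stepn[of "Suc m"] by blast
  show ?thesis unfolding Suc using e1 e2 by linarith
qed

lemma sp2: "x \<in> range v2 \<Longrightarrow> y \<in> range v2 \<Longrightarrow> x < y \<Longrightarrow> x + 2 \<le> y"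
proof -
  assume "x \<in> range v2" "y \<in> range v2" "x < y"
  then obtain i j where ij: "x = v2 i" "y = v2 j" by blast
  have "i < j"
  proof (rule ccontr)
    assume "\<not> i < j"
    then have "j < i \<or> j = i" by linarith
    then show False
    proof
      assume "j < i" then have "v2 j + 2 \<le> v2 i" using gen_spacing[of v2 2 j i] v2_sp by blast
      then show False using ij \<open>x < y\<close> by linarith
    qed (use ij \<open>x < y\<close> in simp)
  qed
  then show ?thesis using gen_spacing[of v2 2 i j] v2_sp ij by blast
qed

lemma sp3: "x \<in> range v3 \<Longrightarrow> y \<in> range v3 \<Longrightarrow> x < y \<Longrightarrow> x + 3 \<le> y"
proof -
  assume "x \<in> range v3" "y \<in> range v3" "x < y"
  then obtain i j where ij: "x = v3 i" "y = v3 j" by blast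
  have "i < j"
  proof (rule ccontr)
    assume "\<not> i < j"
    then have "j < i \<or> j = i" by linarith
    then show False
    proof
      assume "j < i" then have "v3 j + 3 \<le> v3 i" using gen_spacing[of v3 3 j i] v3_sp by blast
      then show False using ij \<open>x < y\<close> by linarith
    qed (use ij \<open>x < y\<close> in simp)
  qed
  then show ?thesis using gen_spacing[of v3 3 i j] v3_sp ij by blast
qed

lemma no4:
  assumes "m \<in> range v2 \<union> range v3" "m + 1 \<in> range v2 \<union> range v3"
    "m + 2 \<in> range v2 \<union> range v3" "m + 3 \<in> range v2 \<union> range v3"
  shows False
proof -
  have a1: "\<not> (x \<in> range v2 \<and> x + 1 \<in> range v2)" for x using sp2[of x "x+1"] by auto
  have a2: "\<not> (x \<in> range v3 \<and> x + 1 \<in> range v3)" for x using sp3[of x "x+1"] by auto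
  have a3: "\<not> (x \<in> range v3 \<and> x + 2 \<in> range v3)" for x using sp3[of x "x+2"] by auto
  have eqs: "m + 1 + 1 = m + 2" "m + 2 + 1 = m + 3" "m + 1 + 2 = m + 3" by simp_all
  have b1: "\<not> (m + 1 \<in> range v2 \<and> m + 2 \<in> range v2)" using a1[of "m+1"] eqs(1) by metis
  have b2: "\<not> (m + 2 \<in> range v2 \<and> m + 3 \<in> range v2)" using a1[of "m+2"] eqs(2) by metis
  have b3: "\<not> (m + 1 \<in> range v3 \<and> m + 2 \<in> range v3)" using a2[of "m+1"] eqs(1) by metis
  have b4: "\<not> (m + 2 \<in> range v3 \<and> m + 3 \<in> range v3)" using a2[of "m+2"] eqs(2) by metis
  have b5: "\<not> (m + 1 \<in> range v3 \<and> m + 3 \<in> range v3)" using a3[of "m+1"] eqs(3) by metis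
  have b6: "\<not> (m \<in> range v3 \<and> m + 2 \<in> range v3)" using a3[of "m"] by simp
  have b7: "\<not> (m \<in> range v2 \<and> m + 1 \<in> range v2)" using a1[of "m"] by simp
  show False using assms b1 b2 b3 b4 b5 b6 b7 by blast
qed

lemma v1_lt: "k \<le> n \<Longrightarrow> v1 k < Mex (F n)"
proof (cases k)
  case 0
  have "Mex (F n) \<noteq> 0" using Mex_notin[OF finF] zF by metis
  then show ?thesis using 0 v0 by simp
next
  case (Suc j)
  assume "k \<le> n"
  then have "j < n" using Suc by simp
  then show ?thesis using Suc v1_Suc F_mono2 by simp
qed

lemma v1_le: "k \<le> Suc n \<Longrightarrow> v1 k \<le> Mex (F n)"
  using v1_lt[of k n] v1_Suc[of n] by (cases "k = Suc n") auto

lemma F_big: "x \<in> F n \<Longrightarrow> Mex (F n) \<le> x \<Longrightarrow> x \<in> range v2 \<union> range v3"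
proof -
  assume "x \<in> F n" "Mex (F n) \<le> x"
  then obtain k where k: "k \<le> n" "x = v1 k \<or> x = v2 k \<or> x = v3 k" unfolding F_def by auto
  then show ?thesis using v1_lt[OF k(1)] \<open>Mex (F n) \<le> x\<close> by auto
qed

lemma F_big2: "x \<in> F (Suc n) \<Longrightarrow> Mex (F n) < x \<Longrightarrow> x \<in> range v2 \<union> range v3"
proof -
  assume "x \<in> F (Suc n)" "Mex (F n) < x"
  then obtain k where k: "k \<le> Suc n" "x = v1 k \<or> x = v2 k \<or> x = v3 k" unfolding F_def by auto
  then show ?thesis using v1_le[OF k(1)] \<open>Mex (F n) < x\<close> by auto
qed

lemma F_hi: "Mex (F (Suc n)) \<le> Mex (F n) + 4"
proof -
  let ?f = "Mex (F n)"
  have "\<not> (?f + 1 \<in> F (Suc n) \<and> ?f + 2 \<in> F (Suc n) \<and> ?f + 3 \<in> F (Suc n) \<and> ?f + 4 \<in> F (Suc n))"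
  proof
    assume h: "?f + 1 \<in> F (Suc n) \<and> ?f + 2 \<in> F (Suc n) \<and> ?f + 3 \<in> F (Suc n) \<and> ?f + 4 \<in> F (Suc n)"
    show False
    proof (rule no4[of "?f + 1"])
      show "?f + 1 \<in> range v2 \<union> range v3" using h F_big2[of "?f + 1" n] by simp
      show "?f + 1 + 1 \<in> range v2 \<union> range v3" using h F_big2[of "?f + 2" n] by simp
      have e3: "?f + 1 + 2 = ?f + 3" by simp
      have "?f + 3 \<in> range v2 \<union> range v3" using h F_big2[of "?f + 3" n] by simp
      then show "?f + 1 + 2 \<in> range v2 \<union> range v3" using e3 by metis
      have e4: "?f + 1 + 3 = ?f + 4" by simp
      have "?f + 4 \<in> range v2 \<union> range v3" using h F_big2[of "?f + 4" n] by simp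
      then show "?f + 1 + 3 \<in> range v2 \<union> range v3" using e4 by metis
    qed
  qed
  then obtain j where j: "j \<in> {1,2,3,4::nat}" "?f + j \<notin> F (Suc n)" by blast
  then have "Mex (F (Suc n)) \<le> ?f + j" using Mex_le by blast
  then show ?thesis using j(1) by auto
qed

lemma Bl_le: "Bl (F n \<inter> {Mex (F n) .. Mex (F n) + Mex (D n) - 1}) \<le> 3"
proof -
  let ?K = "F n \<inter> {Mex (F n) .. Mex (F n) + Mex (D n) - 1}"
  let ?S = "{j. \<exists>m. {m..<m + j} \<subseteq> ?K}"
  have S3: "j \<le> 3" if jS: "j \<in> ?S" for j
  proof (rule ccontr)
    assume nj: "\<not> j \<le> 3"
    obtain m where m: "{m..<m + j} \<subseteq> ?K" using jS by blast
    have R: "m + i \<in> range v2 \<union> range v3" if i4: "i < 4" for i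
    proof -
      have "m + i \<in> {m..<m + j}" using nj i4 by simp
      then have "m + i \<in> ?K" by (rule subsetD[OF m])
      then have "m + i \<in> F n" "Mex (F n) \<le> m + i" by auto
      then show ?thesis by (rule F_big)
    qed
    show False
    proof (rule no4[of m])
      show "m \<in> range v2 \<union> range v3" using R[of 0] by simp
      show "m + 1 \<in> range v2 \<union> range v3" using R[of 1] by simp
      show "m + 2 \<in> range v2 \<union> range v3" using R[of 2] by simp
      show "m + 3 \<in> range v2 \<union> range v3" using R[of 3] by simp
    qed
  qed
  have "0 \<in> ?S" by auto
  then have ne: "?S \<noteq> {}" by blast
  have sub: "?S \<subseteq> {..3}" using S3 by blast
  have fin: "finite ?S" using finite_subset[OF sub] by simp
  show ?thesis unfolding Bl_def using Max_le_iff[OF fin ne] S3 by blast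
qed


lemma v1_diff: "int (v1 (Suc n)) - int (v1 n) \<in> {1..4}"
proof (cases n)
  case 0 then show ?thesis by (simp add: v1_Suc v0 MF0)
next
  case (Suc m)
  have "Mex (F m) + 1 \<le> Mex (F (Suc m))" using F_mono[of m] by simp
  moreover have "Mex (F (Suc m)) \<le> Mex (F m) + 4" by (rule F_hi)
  ultimately show ?thesis unfolding Suc v1_Suc by auto
qed

lemma v23_diff: "int (v2 (Suc n)) - int (v2 n) \<in> {2..8} \<and> int (v3 (Suc n)) - int (v3 n) \<in> {3..12}"
proof (cases n)
  case 0
  obtain e where "e \<le> 2" "v2 (Suc 0) = Mex (F 0) + Mex (D 0) + e" "v3 (Suc 0) = Mex (F 0) + 2 * Mex (D 0) + e"
    using stepn[of 0] by blast
  then show ?thesis using 0 by (simp add: v0 MF0 MD0)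
next
  case (Suc m)
  obtain e1 where e1: "e1 \<le> 2" "v2 (Suc m) = Mex (F m) + Mex (D m) + e1"
      "v3 (Suc m) = Mex (F m) + 2 * Mex (D m) + e1"
      "Mex (D m) + e1 + 1 \<le> Mex (D (Suc m))" "Mex (D (Suc m)) \<le> Mex (D m) + e1 + 2"
      "Mex (F m) + 1 \<le> Mex (F (Suc m))" using stepn[of m] by blast
  obtain e2 where e2: "e2 \<le> 2" "v2 (Suc (Suc m)) = Mex (F (Suc m)) + Mex (D (Suc m)) + e2"
      "v3 (Suc (Suc m)) = Mex (F (Suc m)) + 2 * Mex (D (Suc m)) + e2"
    using stepn[of "Suc m"] by blast
  have "Mex (F (Suc m)) \<le> Mex (F m) + 4" by (rule F_hi)
  then show ?thesis unfolding Suc using e1 e2 by auto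
qed

lemma D_diff: "n \<ge> 1 \<Longrightarrow> int (Mex (D n)) - int (Mex (D (n - 1))) \<in> {1..4}"
proof -
  assume "n \<ge> 1"
  then obtain m where m: "n = Suc m" by (cases n) auto
  obtain e1 where e1: "e1 \<le> 2"
      "Mex (D m) + e1 + 1 \<le> Mex (D (Suc m))" "Mex (D (Suc m)) \<le> Mex (D m) + e1 + 2"
      using stepn[of m] by blast
  then show ?thesis unfolding m by auto
qed

theorem theorem6:
  shows "(\<forall>n. Bl (F n \<inter> {Mex (F n) .. Mex (F n) + Mex (D n) - 1}) \<le> 3)
       \<and> (\<forall>n. int (v1 (Suc n)) - int (v1 n) \<in> {1..4})
       \<and> (\<forall>n. int (v2 (Suc n)) - int (v2 n) \<in> {2..8})
       \<and> (\<forall>n. int (v3 (Suc n)) - int (v3 n) \<in> {3..12})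
       \<and> (\<forall>n\<ge>1. int (Mex (D n)) - int (Mex (D (n - 1))) \<in> {1..4})"
  using Bl_le v1_diff v23_diff D_diff by blast

end
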